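(* Let $(X_n,\eta_n)$ be a time-homogeneous Markov chain on a locally finite set $\Sigma\subseteq\mathbb{R}_+\times S$ ($S$ finite). Suppose that for some $p>2$ there is $C_p<\infty$ with $\mathbb{E}_{x,i}[|X_{n+1}-X_n|^p]\le C_p$ for all $(x,i)\in\Sigma$; that there exist $c_i\in\mathbb{R}$, $s_i^2\ge0$ (at least one $s_i^2\ne0$) with $\mu_i(x)=c_i/x+o(x^{-1})$ and $\sigma_i^2(x)=s_i^2+o(1)$ as $x\to\infty$; and that $q_{ij}(x)\to q_{ij}$ as $x\to\infty$ for all $i,j$, with $(q_{ij})$ an irreducible stochastic matrix. Let $\zeta\in(\frac1{p-1},1)$ and $E_n=\{|X_{n+1}-X_n|\le X_n^\zeta\}$. Let $b_i\in\mathbb{R}$, $i\in S$, and for $r\in\mathbb{R}$ let $f_r$ be as in the context. Then for any $r\in\mathbb{R}$, as $x\to\infty$, \[\mathbb{E}_{x,i}[(f_r(X_{n+1},\eta_{n+1})-f_r(X_n,\eta_n))\mathbf 1(E_n)]=\frac r2x^{r-2}\Big(2c_i+(r-1)s_i^2+\sum_{j\in S}(b_j-b_i)q_{ij}+o(1)\Big).\]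
   Context: $\mathbb{E}_{x,i}[\cdot]=\mathbb{E}[\cdot\mid X_n=x,\eta_n=i]$; $q_{ij}(x)=\Pr[\eta_{n+1}=j\mid X_n=x,\eta_n=i]$; $\mu_i(x)=\mathbb{E}_{x,i}[X_{n+1}-X_n]$; $\sigma_i^2(x)=\mathbb{E}_{x,i}[(X_{n+1}-X_n)^2]$. For $r\in\mathbb{R}$, $x_0:=1+\sqrt{|r|\max_i|b_i|}$ and $f_r(x,i)=x^r+\frac r2b_ix^{r-2}$ for $x\ge x_0$, $f_r(x,i)=x_0^r+\frac r2b_ix_0^{r-2}$ for $x<x_0$. *)

theory Defs
  imports "HOL-Probability.Probability"
begin

fun mat_pow :: "('s::finite \<Rightarrow> 's \<Rightarrow> real) \<Rightarrow> nat \<Rightarrow> 's \<Rightarrow> 's \<Rightarrow> real" where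
  "mat_pow q 0 i j = (if i = j then 1 else 0)"
| "mat_pow q (Suc n) i j = (\<Sum>k\<in>UNIV. mat_pow q n i k * q k j)"

definition stochastic_matrix :: "('s::finite \<Rightarrow> 's \<Rightarrow> real) \<Rightarrow> bool" where
  "stochastic_matrix q \<longleftrightarrow> (\<forall>i j. q i j \<ge> 0) \<and> (\<forall>i. (\<Sum>j\<in>UNIV. q i j) = 1)"

definition irreducible_matrix :: "('s::finite \<Rightarrow> 's \<Rightarrow> real) \<Rightarrow> bool" where
  "irreducible_matrix q \<longleftrightarrow> (\<forall>i j. \<exists>n. mat_pow q n i j > 0)"

definition locally_finite_state_space :: "(real \<times> 's::finite) set \<Rightarrow> bool" where
  "locally_finite_state_space \<Sigma> \<longleftrightarrow>
     (\<forall>z\<in>\<Sigma>. fst z \<ge> 0) \<and> (\<forall>B. finite {z\<in>\<Sigma>. fst z \<le> B})"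

definition at_top_in :: "(real \<times> 's) set \<Rightarrow> 's \<Rightarrow> real filter" where
  "at_top_in \<Sigma> i = at_top \<sqinter> principal {x. (x, i) \<in> \<Sigma>}"

definition x0_of :: "real \<Rightarrow> ('s::finite \<Rightarrow> real) \<Rightarrow> real" where
  "x0_of r b = 1 + sqrt (\<bar>r\<bar> * Max (range (\<lambda>i. \<bar>b i\<bar>)))"

definition f_r :: "('s::finite \<Rightarrow> real) \<Rightarrow> real \<Rightarrow> real \<Rightarrow> 's \<Rightarrow> real" where
  "f_r b r x i =
     (if x \<ge> x0_of r b then x powr r + r / 2 * b i * x powr (r - 2)
      else x0_of r b powr r + r / 2 * b i * x0_of r b powr (r - 2))"

end

theory Submission
  imports Defs
begin
lemma pow_bound:
  fixes u e :: real
  assumes "1/2 \<le> u" "u \<le> 2"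
  shows "u powr e \<le> 2 powr \<bar>e\<bar>"
proof (cases "e \<ge> 0")
  case True
  have "u powr e \<le> 2 powr e" by (rule powr_mono2) (use True assms in auto)
  then show ?thesis using True by simp
next
  case False
  have "u powr e = inverse u powr (-e)"
    using assms by (simp add: inverse_eq_divide powr_divide powr_minus_divide)
  also have "\<dots> \<le> 2 powr (-e)"
    by (rule powr_mono2) (use False assms in \<open>auto simp: field_simps\<close>)
  finally show ?thesis using False by simp
qed

lemma taylor_powr:
  fixes a :: real and n :: nat
  shows "\<exists>K. \<forall>t. \<bar>t\<bar> \<le> 1/2 \<longrightarrow>
     \<bar>(1+t) powr a - (\<Sum>m<n. (\<Prod>k<m. (a - real k)) / fact m * t^m)\<bar> \<le> K * \<bar>t\<bar>^n"
proof -
  define d where "d m t = (\<Prod>k<m. (a - real k)) * (1+t) powr (a - real m)" for m t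
  show ?thesis
  proof (intro exI allI impI)
    fix t :: real assume t: "\<bar>t\<bar> \<le> 1/2"
    have D: "\<forall>m s. m < n \<and> \<bar>s\<bar> \<le> \<bar>t\<bar> \<longrightarrow> DERIV (d m) s :> d (Suc m) s"
    proof (intro allI impI)
      fix m s assume "m < n \<and> \<bar>s\<bar> \<le> \<bar>t\<bar>"
      then have s: "1 + s > 0" using t by auto
      have "DERIV (\<lambda>s. (1+s) powr (a - real m)) s :> (a - real m) * (1+s) powr (a - real m - 1) * 1"
        by (rule DERIV_chain2[where f="\<lambda>z. z powr (a - real m)" and g="\<lambda>s. 1+s", OF has_real_derivative_powr[OF s]]) (auto intro!: derivative_eq_intros)
      then have "DERIV (d m) s :> (\<Prod>k<m. (a - real k)) * ((a - real m) * (1+s) powr (a - real m - 1) * 1)"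
        unfolding d_def by (rule DERIV_cmult)
      moreover have "(\<Prod>k<m. (a - real k)) * ((a - real m) * (1+s) powr (a - real m - 1) * 1) = d (Suc m) s"
        unfolding d_def by (simp add: algebra_simps diff_diff_add)
      ultimately show "DERIV (d m) s :> d (Suc m) s" by simp
    qed
    obtain s where s: "\<bar>s\<bar> \<le> \<bar>t\<bar>"
      and eq: "d 0 t = (\<Sum>m<n. d m 0 / fact m * t ^ m) + d n s / fact n * t ^ n"
      using Maclaurin_bi_le[of d "d 0" n t, OF refl D] by blast
    have e0: "d 0 t = (1+t) powr a" by (simp add: d_def)
    have em: "d m 0 = (\<Prod>k<m. (a - real k))" for m by (simp add: d_def)
    have bnd: "(1+s) powr (a - real n) \<le> 2 powr \<bar>a - real n\<bar>"
      by (rule pow_bound) (use s t in auto)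
    have "\<bar>(1+t) powr a - (\<Sum>m<n. (\<Prod>k<m. (a - real k)) / fact m * t^m)\<bar> = \<bar>d n s / fact n * t ^ n\<bar>"
      using eq e0 em by simp
    also have "\<dots> = \<bar>\<Prod>k<n. (a - real k)\<bar> * (1+s) powr (a - real n) / fact n * \<bar>t\<bar> ^ n"
      by (simp add: d_def abs_mult power_abs)
    also have "\<dots> \<le> \<bar>\<Prod>k<n. (a - real k)\<bar> * 2 powr \<bar>a - real n\<bar> / fact n * \<bar>t\<bar> ^ n"
      by (intro mult_right_mono divide_right_mono mult_left_mono bnd) auto
    finally show "\<bar>(1+t) powr a - (\<Sum>m<n. (\<Prod>k<m. (a - real k)) / fact m * t^m)\<bar>
        \<le> \<bar>\<Prod>k<n. (a - real k)\<bar> * 2 powr \<bar>a - real n\<bar> / fact n * \<bar>t\<bar> ^ n" .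
  qed
qed

lemma taylor1: fixes a :: real shows "\<exists>K. \<forall>t. \<bar>t\<bar> \<le> 1/2 \<longrightarrow> \<bar>(1+t) powr a - 1\<bar> \<le> K * \<bar>t\<bar>"
  using taylor_powr[of a 1] by simp

lemma taylor3: fixes a :: real shows "\<exists>K. \<forall>t. \<bar>t\<bar> \<le> 1/2 \<longrightarrow> \<bar>(1+t) powr a - 1 - a * t - a * (a - 1) / 2 * t^2\<bar> \<le> K * \<bar>t\<bar>^3"
proof -
  have e: "(\<Sum>m<3. (\<Prod>k<m. (a - real k)) / fact m * t^m) = 1 + a * t + a * (a - 1) / 2 * t^2" for t
    by (simp add: numeral_3_eq_3 numeral_2_eq_2 fact_numeral algebra_simps)
  show ?thesis using taylor_powr[of a 3] unfolding e by (simp add: algebra_simps)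
qed



lemma abs_int_bound:
  fixes f g :: "'a \<Rightarrow> real"
  assumes "integrable M g" "\<And>z. \<bar>f z\<bar> \<le> g z"
  shows "\<bar>integral\<^sup>L M f\<bar> \<le> integral\<^sup>L M g"
proof -
  have "\<bar>integral\<^sup>L M f\<bar> \<le> (\<integral>z. norm (f z) \<partial>M)"
    using integral_norm_bound[of M f] by simp
  also have "\<dots> \<le> integral\<^sup>L M g"
    by (rule integral_mono') (use assms in \<open>auto intro: order_trans[OF abs_ge_zero]\<close>)
  finally show ?thesis .
qed

lemma moments:
  fixes M :: "'a pmf" and g :: "'a \<Rightarrow> real"
  assumes int: "integrable (measure_pmf M) (\<lambda>z. \<bar>g z\<bar> powr p)" and p: "p > 2"
  shows "integrable (measure_pmf M) g" "integrable (measure_pmf M) (\<lambda>z. (g z)^2)"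
proof -
  have I: "integrable (measure_pmf M) (\<lambda>z. 1 + \<bar>g z\<bar> powr p)"
    using int by simp
  have b1: "\<bar>g z\<bar> \<le> 1 + \<bar>g z\<bar> powr p" for z
  proof (cases "\<bar>g z\<bar> \<le> 1")
    case True then show ?thesis by (smt (verit) powr_ge_zero)
  next
    case False
    have "\<bar>g z\<bar> powr 1 \<le> \<bar>g z\<bar> powr p" by (rule powr_mono) (use False p in auto)
    then show ?thesis by simp
  qed
  have b2: "(g z)^2 \<le> 1 + \<bar>g z\<bar> powr p" for z
  proof (cases "\<bar>g z\<bar> \<le> 1")
    case True
    then have "(g z)^2 \<le> 1" by (simp add: abs_le_square_iff[symmetric] abs_square_le_1)
    then show ?thesis by (smt (verit) powr_ge_zero)
  next
    case False
    have "\<bar>g z\<bar> powr 2 \<le> \<bar>g z\<bar> powr p" by (rule powr_mono) (use False p in auto)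
    then show ?thesis by simp
  qed
  show "integrable (measure_pmf M) g"
    by (rule Bochner_Integration.integrable_bound[OF I]) (use b1 in \<open>auto intro!: AE_I2 order_trans[OF _ abs_ge_self]\<close>)
  show "integrable (measure_pmf M) (\<lambda>z. (g z)^2)"
    by (rule Bochner_Integration.integrable_bound[OF I]) (use b2 in \<open>auto intro!: AE_I2 order_trans[OF _ abs_ge_self]\<close>)
qed

lemma tail:
  fixes M :: "'a pmf" and g u :: "'a \<Rightarrow> real"
  assumes int: "integrable (measure_pmf M) (\<lambda>z. \<bar>u z\<bar> powr p)"
    and bd: "measure_pmf.expectation M (\<lambda>z. \<bar>u z\<bar> powr p) \<le> C"
    and h: "h > 0" and k: "0 \<le> k" "k \<le> p" and B: "B \<ge> 0"
    and gb: "\<And>z. \<bar>u z\<bar> > h \<Longrightarrow> \<bar>g z\<bar> \<le> B * \<bar>u z\<bar> powr k"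
  shows "integrable (measure_pmf M) (\<lambda>z. g z * (1 - indicator {z. \<bar>u z\<bar> \<le> h} z))"
    "\<bar>measure_pmf.expectation M (\<lambda>z. g z * (1 - indicator {z. \<bar>u z\<bar> \<le> h} z))\<bar> \<le> B * C / h powr (p - k)"
proof -
  define G where "G z = B / h powr (p-k) * \<bar>u z\<bar> powr p" for z
  have IG: "integrable (measure_pmf M) G" unfolding G_def using int by simp
  have G0: "G z \<ge> 0" for z unfolding G_def using B by simp
  have pw: "\<bar>g z * (1 - indicator {z. \<bar>u z\<bar> \<le> h} z)\<bar> \<le> G z" for z
  proof (cases "\<bar>u z\<bar> \<le> h")
    case True then show ?thesis using G0[of z] by simp
  next
    case False
    then have uh: "\<bar>u z\<bar> > h" by simp
    have "\<bar>u z\<bar> powr k * h powr (p-k) \<le> \<bar>u z\<bar> powr k * \<bar>u z\<bar> powr (p-k)"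
      by (intro mult_left_mono powr_mono2) (use uh h k in auto)
    also have "\<dots> = \<bar>u z\<bar> powr (k + (p-k))" by (rule powr_add[symmetric])
    also have "\<dots> = \<bar>u z\<bar> powr p" by simp
    finally have "\<bar>u z\<bar> powr k \<le> \<bar>u z\<bar> powr p / h powr (p-k)" using h by (simp add: field_simps)
    then have "B * \<bar>u z\<bar> powr k \<le> G z" unfolding G_def using B
      by (metis mult_left_mono times_divide_eq_left times_divide_eq_right)
    then show ?thesis using False gb[OF uh] by simp
  qed
  show "integrable (measure_pmf M) (\<lambda>z. g z * (1 - indicator {z. \<bar>u z\<bar> \<le> h} z))"
    by (rule Bochner_Integration.integrable_bound[OF IG]) (use pw G0 in \<open>auto intro!: AE_I2\<close>)
  have "\<bar>measure_pmf.expectation M (\<lambda>z. g z * (1 - indicator {z. \<bar>u z\<bar> \<le> h} z))\<bar>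
      \<le> measure_pmf.expectation M G" by (rule abs_int_bound[OF IG pw])
  also have "\<dots> = B / h powr (p-k) * measure_pmf.expectation M (\<lambda>z. \<bar>u z\<bar> powr p)"
    unfolding G_def by simp
  also have "\<dots> \<le> B / h powr (p-k) * C" by (rule mult_left_mono[OF bd]) (use B in simp)
  finally show "\<bar>measure_pmf.expectation M (\<lambda>z. g z * (1 - indicator {z. \<bar>u z\<bar> \<le> h} z))\<bar> \<le> B * C / h powr (p - k)"
    by simp
qed

lemma pointwise:
  fixes x y r bj bi w K1 K3 :: real
  assumes x: "x > 0" and d1: "\<bar>y - x\<bar> \<le> x/2" and dw: "\<bar>y-x\<bar> \<le> x * w"
   and T1: "\<forall>t. \<bar>t\<bar> \<le> 1/2 \<longrightarrow> \<bar>(1+t) powr (r-2) - 1\<bar> \<le> K1 * \<bar>t\<bar>"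
   and T3: "\<forall>t. \<bar>t\<bar> \<le> 1/2 \<longrightarrow> \<bar>(1+t) powr r - 1 - r*t - r*(r-1)/2*t^2\<bar> \<le> K3 * \<bar>t\<bar>^3"
   and K: "K1 \<ge> 0" "K3 \<ge> 0"
  shows "\<bar>x powr (2-r) * ((y powr r + r/2*bj*y powr (r-2)) - (x powr r + r/2*bi*x powr (r-2)))
          - (r*x*(y-x) + r*(r-1)/2*(y-x)^2 + r/2*(bj-bi))\<bar> \<le> w*(K3*(y-x)^2 + \<bar>r\<bar>/2*\<bar>bj\<bar>*K1)"
proof -
  define t where "t = (y-x)/x"
  have yx: "y = x*(1+t)" and dx: "y - x = x * t" using x by (auto simp: t_def field_simps)
  have t2: "\<bar>t\<bar> \<le> 1/2" using d1 x by (simp add: t_def abs_div field_simps)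
  have tw: "\<bar>t\<bar> \<le> w" using dw x by (simp add: t_def abs_div field_simps)
  have pos: "1 + t > 0" using t2 by auto
  have py: "y powr r = x powr r * (1+t) powr r" unfolding yx by (rule powr_mult)
  have py2: "y powr (r-2) = x powr (r-2) * (1+t) powr (r-2)" unfolding yx by (rule powr_mult)
  have c1: "x powr (2-r) * x powr r = x^2"
    by (simp add: powr_add[symmetric] less_imp_le[OF x])
  have c2: "x powr (2-r) * x powr (r-2) = 1"
    using x by (simp add: powr_add[symmetric])
  define R3 where "R3 = (1+t) powr r - 1 - r*t - r*(r-1)/2*t^2"
  define R1 where "R1 = (1+t) powr (r-2) - 1"
  have "x powr (2-r) * ((y powr r + r/2*bj*y powr (r-2)) - (x powr r + r/2*bi*x powr (r-2)))
          - (r*x*(y-x) + r*(r-1)/2*(y-x)^2 + r/2*(bj-bi))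
        = (x powr (2-r) * x powr r) * (1+t) powr r + r/2*bj*(x powr (2-r) * x powr (r-2)) * (1+t) powr (r-2)
          - (x powr (2-r) * x powr r) - r/2*bi*(x powr (2-r) * x powr (r-2))
          - (r*x*(x*t) + r*(r-1)/2*(x*t)^2 + r/2*(bj-bi))"
    unfolding py py2 dx by (simp add: algebra_simps)
  also have "\<dots> = x^2 * R3 + r/2*bj*R1"
    unfolding c1 c2 R3_def R1_def by (simp add: field_simps power2_eq_square)
  finally have eq: "x powr (2-r) * ((y powr r + r/2*bj*y powr (r-2)) - (x powr r + r/2*bi*x powr (r-2)))
          - (r*x*(y-x) + r*(r-1)/2*(y-x)^2 + r/2*(bj-bi)) = x^2 * R3 + r/2*bj*R1" .
  have b3: "\<bar>x^2 * R3\<bar> \<le> w * (K3*(y-x)^2)"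
  proof -
    have "\<bar>x^2 * R3\<bar> \<le> x^2 * (K3 * \<bar>t\<bar>^3)"
      unfolding abs_mult using T3 t2 by (simp add: R3_def mult_left_mono)
    also have "\<dots> = \<bar>t\<bar> * (K3 * (x*t)^2)" by (simp add: power2_eq_square power3_eq_cube abs_mult_self_eq algebra_simps)
    also have "\<dots> \<le> w * (K3*(x*t)^2)" by (rule mult_right_mono[OF tw]) (use K in simp)
    finally show ?thesis unfolding dx .
  qed
  have b1: "\<bar>r/2*bj*R1\<bar> \<le> w * (\<bar>r\<bar>/2*\<bar>bj\<bar>*K1)"
  proof -
    have "\<bar>r/2*bj*R1\<bar> = \<bar>r\<bar>/2*\<bar>bj\<bar>*\<bar>R1\<bar>" by (simp add: abs_mult)
    also have "\<dots> \<le> \<bar>r\<bar>/2*\<bar>bj\<bar>*(K1*\<bar>t\<bar>)"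
      by (rule mult_left_mono) (use T1 t2 in \<open>auto simp: R1_def\<close>)
    also have "\<dots> \<le> \<bar>r\<bar>/2*\<bar>bj\<bar>*(K1*w)"
      by (intro mult_left_mono tw) (use K in auto)
    finally show ?thesis by (simp add: algebra_simps)
  qed
  show ?thesis unfolding eq using b1 b3 by (smt (verit) abs_triangle_ineq distrib_left)
qed

lemma mul_powr:
  fixes x a :: real
  assumes "x > 0" shows "x * x powr (a - 1) = x powr a"
proof -
  have "x powr 1 * x powr (a-1) = x powr (1 + (a-1))" by (rule powr_add[symmetric])
  then show ?thesis using assms by simp
qed

lemma div_powr:
  fixes x a :: real
  assumes "x > 0" shows "x / x powr a = x powr (1 - a)"
proof -
  have "x powr (1 - a) = x powr 1 / x powr a" by (rule powr_diff)
  then show ?thesis using assms by simp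
qed

lemma pmf_ind_int: "integrable (measure_pmf M) (indicator A :: _ \<Rightarrow> real)"
  by (rule Bochner_Integration.integrable_bound[of _ "\<lambda>_. 1::real"]) (auto simp: indicator_def intro!: AE_I2)

theorem lemma3p6:
  fixes \<Sigma> :: "(real \<times> 's::finite) set"
    and K :: "real \<times> 's \<Rightarrow> (real \<times> 's) pmf"
    and p Cp \<zeta> :: real
    and c s2 b :: "'s \<Rightarrow> real"
    and q :: "'s \<Rightarrow> 's \<Rightarrow> real"
  assumes lf: "locally_finite_state_space \<Sigma>"
    and K_in: "\<And>z. z \<in> \<Sigma> \<Longrightarrow> set_pmf (K z) \<subseteq> \<Sigma>"
    and p_gt: "p > 2"
    and moment_int: "\<And>x i. (x, i) \<in> \<Sigma> \<Longrightarrow>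
        integrable (measure_pmf (K (x, i))) (\<lambda>(y, j). \<bar>y - x\<bar> powr p)"
    and moment_bd: "\<And>x i. (x, i) \<in> \<Sigma> \<Longrightarrow>
        measure_pmf.expectation (K (x, i)) (\<lambda>(y, j). \<bar>y - x\<bar> powr p) \<le> Cp"
    and mu: "\<And>i. ((\<lambda>x. x * measure_pmf.expectation (K (x, i)) (\<lambda>(y, j). y - x) - c i)
                  \<longlongrightarrow> 0) (at_top_in \<Sigma> i)"
    and sigma: "\<And>i. ((\<lambda>x. measure_pmf.expectation (K (x, i)) (\<lambda>(y, j). (y - x)\<^sup>2))
                  \<longlongrightarrow> s2 i) (at_top_in \<Sigma> i)"
    and s2_nonneg: "\<And>i. s2 i \<ge> 0"
    and s2_nz: "\<exists>i. s2 i \<noteq> 0"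
    and q_lim: "\<And>i j. ((\<lambda>x. measure_pmf.prob (K (x, i)) {z. snd z = j})
                  \<longlongrightarrow> q i j) (at_top_in \<Sigma> i)"
    and q_stoch: "stochastic_matrix q"
    and q_irr: "irreducible_matrix q"
    and zeta: "1 / (p - 1) < \<zeta>" "\<zeta> < 1"
  shows "\<exists>e. (e \<longlongrightarrow> 0) (at_top_in \<Sigma> i) \<and>
           (\<forall>\<^sub>F x in at_top_in \<Sigma> i.
              measure_pmf.expectation (K (x, i))
                (\<lambda>(y, j). (f_r b r y j - f_r b r x i) * indicator {z. \<bar>fst z - x\<bar> \<le> x powr \<zeta>} (y, j))
              = r / 2 * x powr (r - 2) *
                (2 * c i + (r - 1) * s2 i + (\<Sum>j\<in>UNIV. (b j - b i) * q i j) + e x))"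
proof (cases "r = 0")
  case True
  have f1: "f_r b 0 y j = 1" for y j
    by (simp add: f_r_def x0_of_def)
  show ?thesis using True by (intro exI[of _ "\<lambda>_. 0"]) (simp add: f1 case_prod_unfold)
next
  case False
  note r = False
  define F where "F = at_top_in \<Sigma> i"
  have FS: "eventually (\<lambda>x. (x,i)\<in>\<Sigma>) F" unfolding F_def at_top_in_def eventually_inf_principal by simp
  have Fle: "F \<le> at_top" unfolding F_def at_top_in_def by simp
  have Ftop: "filterlim (\<lambda>x. x) at_top F" by (rule filterlim_mono[OF filterlim_ident order_refl Fle])
  have evat: "eventually P F" if "eventually P at_top" for P using filter_leD[OF Fle that] .
  have pw: "((\<lambda>x. x powr a) \<longlongrightarrow> 0) F" if "a < 0" for a using tendsto_neg_powr[OF that Ftop] by simp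
  have p1: "p - 1 > 0" using p_gt by simp
  have zp: "\<zeta>*(p-1) > 1" using zeta(1) p1 by (simp add: field_simps)
  have z0: "\<zeta> > 0" using zeta(1) p1 by (smt (verit) divide_pos_pos)
  define x0 where "x0 = x0_of r b"
  obtain K1 where K1: "\<forall>t. \<bar>t\<bar> \<le> 1/2 \<longrightarrow> \<bar>(1+t) powr (r-2) - 1\<bar> \<le> K1*\<bar>t\<bar>" using taylor1 by blast
  obtain K3 where K3: "\<forall>t. \<bar>t\<bar> \<le> 1/2 \<longrightarrow> \<bar>(1+t) powr r - 1 - r * t - r * (r - 1) / 2 * t^2\<bar> \<le> K3 * \<bar>t\<bar>^3"
    using taylor3 by blast
  have K1p: "K1 \<ge> 0"
  proof -
    have "\<bar>(1 + 1/2) powr (r-2) - 1\<bar> \<le> K1 * \<bar>1/2\<bar>" by (rule K1[rule_format]) simp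
    then have "0 \<le> K1 * \<bar>1/2\<bar>" by (rule order_trans[OF abs_ge_zero])
    then show ?thesis by (simp add: zero_le_mult_iff)
  qed
  have K3p: "K3 \<ge> 0"
  proof -
    have "\<bar>(1 + 1/2) powr r - 1 - r * (1/2) - r * (r - 1) / 2 * (1/2)^2\<bar> \<le> K3 * \<bar>1/2\<bar>^3"
      by (rule K3[rule_format]) simp
    then have "0 \<le> K3 * \<bar>1/2\<bar>^3" by (rule order_trans[OF abs_ge_zero])
    then show ?thesis by (simp add: zero_le_mult_iff)
  qed
  define Bs where "Bs = (\<Sum>k\<in>UNIV. \<bar>b k\<bar>)"
  have bB: "\<bar>b k\<bar> \<le> Bs" for k unfolding Bs_def by (rule member_le_sum) auto
  have Bs0: "Bs \<ge> 0" using bB[of i] by simp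
  have bB2: "\<bar>b k - b i\<bar> \<le> 2*Bs" for k using bB[of k] bB[of i] by simp
  define L where "L = \<bar>r\<bar>/2*Bs*K1"
  have L0: "L \<ge> 0" unfolding L_def using Bs0 K1p by simp
  define w where "w x = x powr (\<zeta> - 1)" for x :: real
  have w0: "w x \<ge> 0" for x unfolding w_def by simp
  have wlim: "(w \<longlongrightarrow> 0) F" unfolding w_def using pw zeta(2) by simp
  define Ind where "Ind x z = (indicator {z::real\<times>'s. \<bar>fst z - x\<bar> \<le> x powr \<zeta>} z :: real)" for x z

  define good where "good x \<longleftrightarrow> (x,i)\<in>\<Sigma> \<and> x > 0 \<and> x powr \<zeta> \<le> x/2 \<and> x0 \<le> x/2" for x
  have evgood: "eventually good F"
  proof -
    have e1: "eventually (\<lambda>x. w x < 1/2) F" using order_tendstoD(2)[OF wlim, of "1/2"] by simp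
    have e2: "eventually (\<lambda>x. x > 0 \<and> x \<ge> 2*x0) F"
      by (rule evat) (intro eventually_conj eventually_gt_at_top eventually_ge_at_top)
    show ?thesis using e1 e2 FS
    proof eventually_elim
      case (elim x)
      then have x: "x > 0" by simp
      have "x powr \<zeta> = x * w x" unfolding w_def using mul_powr[OF x, of \<zeta>] by simp
      also have "\<dots> \<le> x * (1/2)" using elim x by (intro mult_left_mono) auto
      finally show ?case using elim unfolding good_def by simp
    qed
  qed

  have mi: "integrable (measure_pmf (K (x,i))) (\<lambda>z. \<bar>fst z - x\<bar> powr p)" if "(x,i)\<in>\<Sigma>" for x
    using moment_int[OF that] by (simp add: case_prod_unfold)
  have mb: "measure_pmf.expectation (K (x,i)) (\<lambda>z. \<bar>fst z - x\<bar> powr p) \<le> Cp" if "(x,i)\<in>\<Sigma>" for x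
    using moment_bd[OF that] by (simp add: case_prod_unfold)
  have iD: "integrable (measure_pmf (K (x,i))) (\<lambda>z. fst z - x)" if "(x,i)\<in>\<Sigma>" for x
    using moments(1)[OF mi[OF that] p_gt] .
  have iV: "integrable (measure_pmf (K (x,i))) (\<lambda>z. (fst z - x)^2)" if "(x,i)\<in>\<Sigma>" for x
    using moments(2)[OF mi[OF that] p_gt] .
  have iC: "integrable (measure_pmf (K (x,i))) (\<lambda>z. b (snd z) - b i)" for x
    by (rule Bochner_Integration.integrable_bound[of _ "\<lambda>_. 2*Bs"]) (use bB2 Bs0 in \<open>auto intro!: AE_I2\<close>)

  define t1 where "t1 x = measure_pmf.expectation (K (x,i)) (\<lambda>z. (fst z - x) * (1 - Ind x z))" for x
  define t2 where "t2 x = measure_pmf.expectation (K (x,i)) (\<lambda>z. (fst z - x)^2 * (1 - Ind x z))" for x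
  define t3 where "t3 x = measure_pmf.expectation (K (x,i)) (\<lambda>z. (b (snd z) - b i) * (1 - Ind x z))" for x
  have T1: "integrable (measure_pmf (K (x,i))) (\<lambda>z. (fst z - x) * (1 - Ind x z))
      \<and> \<bar>t1 x\<bar> \<le> 1 * Cp / (x powr \<zeta>) powr (p - 1)" if "good x" for x
  proof -
    have s: "(x,i)\<in>\<Sigma>" "x > 0" using that good_def by auto
    have h: "x powr \<zeta> > 0" using s by simp
    note tl = tail[OF mi[OF s(1)] mb[OF s(1)] h, of 1 1 "\<lambda>z. fst z - x"]
    have c: "\<And>z. x powr \<zeta> < \<bar>fst z - x\<bar> \<Longrightarrow> \<bar>fst z - x\<bar> \<le> 1 * \<bar>fst z - x\<bar> powr 1" by simp
    show ?thesis using tl(1)[OF _ _ _ c] tl(2)[OF _ _ _ c] p_gt unfolding t1_def Ind_def by simp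
  qed
  have T2: "integrable (measure_pmf (K (x,i))) (\<lambda>z. (fst z - x)^2 * (1 - Ind x z))
      \<and> \<bar>t2 x\<bar> \<le> 1 * Cp / (x powr \<zeta>) powr (p - 2)" if "good x" for x
  proof -
    have s: "(x,i)\<in>\<Sigma>" "x > 0" using that good_def by auto
    have h: "x powr \<zeta> > 0" using s by simp
    note tl = tail[OF mi[OF s(1)] mb[OF s(1)] h, of 2 1 "\<lambda>z. (fst z - x)^2"]
    have c: "\<And>z. x powr \<zeta> < \<bar>fst z - x\<bar> \<Longrightarrow> \<bar>(fst z - x)^2\<bar> \<le> 1 * \<bar>fst z - x\<bar> powr 2" by simp
    show ?thesis using tl(1)[OF _ _ _ c] tl(2)[OF _ _ _ c] p_gt unfolding t2_def Ind_def by simp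
  qed
  have T3: "integrable (measure_pmf (K (x,i))) (\<lambda>z. (b (snd z) - b i) * (1 - Ind x z))
      \<and> \<bar>t3 x\<bar> \<le> (2*Bs) * Cp / (x powr \<zeta>) powr (p - 0)" if "good x" for x
  proof -
    have s: "(x,i)\<in>\<Sigma>" "x > 0" using that good_def by auto
    have h: "x powr \<zeta> > 0" using s by simp
    note tl = tail[OF mi[OF s(1)] mb[OF s(1)] h, of 0 "2*Bs" "\<lambda>z. b (snd z) - b i"]
    have c: "\<And>z. x powr \<zeta> < \<bar>fst z - x\<bar> \<Longrightarrow> \<bar>b (snd z) - b i\<bar> \<le> (2*Bs) * \<bar>fst z - x\<bar> powr 0"
    proof -
      fix z :: "real \<times> 's" assume "x powr \<zeta> < \<bar>fst z - x\<bar>"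
      then have "fst z - x \<noteq> 0" using h by auto
      then show "\<bar>b (snd z) - b i\<bar> \<le> (2*Bs) * \<bar>fst z - x\<bar> powr 0" using bB2 by simp
    qed
    show ?thesis using tl(1)[OF _ _ _ c] tl(2)[OF _ _ _ c] p_gt Bs0 unfolding t3_def Ind_def by simp
  qed
  define a1 where "a1 x = measure_pmf.expectation (K (x,i)) (\<lambda>z. (fst z - x) * Ind x z)" for x
  define a2 where "a2 x = measure_pmf.expectation (K (x,i)) (\<lambda>z. (fst z - x)^2 * Ind x z)" for x
  define a3 where "a3 x = measure_pmf.expectation (K (x,i)) (\<lambda>z. (b (snd z) - b i) * Ind x z)" for x
  define D where "D x = measure_pmf.expectation (K (x,i)) (\<lambda>(y,j). y - x)" for x
  define V where "V x = measure_pmf.expectation (K (x,i)) (\<lambda>(y,j). (y - x)^2)" for x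
  define S where "S x = (\<Sum>j\<in>UNIV. (b j - b i) * measure_pmf.prob (K (x, i)) {z. snd z = j})" for x
  have D': "D x = measure_pmf.expectation (K (x,i)) (\<lambda>z. fst z - x)" for x
    unfolding D_def by (simp add: case_prod_unfold)
  have V': "V x = measure_pmf.expectation (K (x,i)) (\<lambda>z. (fst z - x)^2)" for x
    unfolding V_def by (simp add: case_prod_unfold)
  have iA1: "integrable (measure_pmf (K (x,i))) (\<lambda>z. (fst z - x) * Ind x z)" if "(x,i)\<in>\<Sigma>" for x
    by (rule Bochner_Integration.integrable_bound[OF iD[OF that]]) (auto intro!: AE_I2 simp: Ind_def indicator_def)
  have iA2: "integrable (measure_pmf (K (x,i))) (\<lambda>z. (fst z - x)^2 * Ind x z)" if "(x,i)\<in>\<Sigma>" for x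
    by (rule Bochner_Integration.integrable_bound[OF iV[OF that]]) (auto intro!: AE_I2 simp: Ind_def indicator_def)
  have iA3: "integrable (measure_pmf (K (x,i))) (\<lambda>z. (b (snd z) - b i) * Ind x z)" for x
    by (rule Bochner_Integration.integrable_bound[OF iC]) (auto intro!: AE_I2 simp: Ind_def indicator_def)
  have A1: "a1 x = D x - t1 x" if "good x" for x
  proof -
    have s: "(x,i)\<in>\<Sigma>" using that good_def by auto
    have "a1 x = measure_pmf.expectation (K (x,i)) (\<lambda>z. (fst z - x) - (fst z - x) * (1 - Ind x z))"
      unfolding a1_def by (simp add: algebra_simps)
    also have "\<dots> = D x - t1 x" unfolding D' t1_def
      by (rule Bochner_Integration.integral_diff[OF iD[OF s] conjunct1[OF T1[OF that]]])
    finally show ?thesis .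
  qed
  have A2: "a2 x = V x - t2 x" if "good x" for x
  proof -
    have s: "(x,i)\<in>\<Sigma>" using that good_def by auto
    have "a2 x = measure_pmf.expectation (K (x,i)) (\<lambda>z. (fst z - x)^2 - (fst z - x)^2 * (1 - Ind x z))"
      unfolding a2_def by (simp add: algebra_simps)
    also have "\<dots> = V x - t2 x" unfolding V' t2_def
      by (rule Bochner_Integration.integral_diff[OF iV[OF s] conjunct1[OF T2[OF that]]])
    finally show ?thesis .
  qed
  have S': "measure_pmf.expectation (K (x,i)) (\<lambda>z. b (snd z) - b i) = S x" for x
  proof -
    have eq: "(\<lambda>z::real \<times> 's. b (snd z) - b i) = (\<lambda>z. \<Sum>j\<in>UNIV. (b j - b i) * indicator {z. snd z = j} z)"
    proof (rule ext)
      fix z :: "real \<times> 's"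
      have "(\<Sum>j\<in>UNIV. (b j - b i) * indicator {z. snd z = j} z) = (\<Sum>j\<in>UNIV. if snd z = j then b j - b i else 0)"
        by (intro sum.cong) (auto simp: indicator_def)
      also have "\<dots> = b (snd z) - b i" by (simp add: sum.delta)
      finally show "b (snd z) - b i = (\<Sum>j\<in>UNIV. (b j - b i) * indicator {z. snd z = j} z)" by simp
    qed
    show ?thesis unfolding eq S_def
      by (subst Bochner_Integration.integral_sum) (auto simp: pmf_ind_int)
  qed
  have A3: "a3 x = S x - t3 x" if "good x" for x
  proof -
    have "a3 x = measure_pmf.expectation (K (x,i)) (\<lambda>z. (b (snd z) - b i) - (b (snd z) - b i) * (1 - Ind x z))"
      unfolding a3_def by (simp add: algebra_simps)
    also have "\<dots> = S x - t3 x" unfolding S'[symmetric] t3_def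
      by (rule Bochner_Integration.integral_diff[OF iC conjunct1[OF T3[OF that]]])
    finally show ?thesis .
  qed

  have lim1: "((\<lambda>x. x * a1 x) \<longlongrightarrow> c i) F"
  proof -
    have xD: "((\<lambda>x. x * D x) \<longlongrightarrow> c i) F"
    proof -
      have "((\<lambda>x. (x * D x - c i) + c i) \<longlongrightarrow> 0 + c i) F"
        by (rule tendsto_add[OF mu[of i, folded F_def D_def] tendsto_const])
      then show ?thesis by simp
    qed
    have xt: "((\<lambda>x. x * t1 x) \<longlongrightarrow> 0) F"
    proof (rule Lim_null_comparison)
      show "\<forall>\<^sub>F x in F. norm (x * t1 x) \<le> Cp * x powr (1 - \<zeta>*(p-1))"
        using evgood
      proof eventually_elim
        case (elim x)
        then have x: "x > 0" by (simp add: good_def)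
        have "norm (x * t1 x) = x * \<bar>t1 x\<bar>" using x by (simp add: abs_mult)
        also have "\<dots> \<le> x * (1 * Cp / (x powr \<zeta>) powr (p - 1))"
          by (rule mult_left_mono) (use T1[OF elim] x in auto)
        also have "\<dots> = Cp * (x / x powr (\<zeta>*(p-1)))" using x by (simp add: powr_powr)
        also have "\<dots> = Cp * x powr (1 - \<zeta>*(p-1))" using div_powr[OF x] by simp
        finally show ?case .
      qed
      show "((\<lambda>x. Cp * x powr (1 - \<zeta>*(p-1))) \<longlongrightarrow> 0) F"
        using tendsto_mult[OF tendsto_const pw, of "1 - \<zeta>*(p-1)" Cp] zp by simp
    qed
    have LL: "((\<lambda>x. x * D x - x * t1 x) \<longlongrightarrow> c i) F" using tendsto_diff[OF xD xt] by simp
    have ev: "\<forall>\<^sub>F x in F. x * D x - x * t1 x = x * a1 x"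
      using evgood by (auto elim!: eventually_mono simp: A1 algebra_simps)
    show ?thesis by (rule Lim_transform_eventually[OF LL ev])
  qed
  have lim2: "(a2 \<longlongrightarrow> s2 i) F"
  proof -
    have xt: "(t2 \<longlongrightarrow> 0) F"
    proof (rule Lim_null_comparison)
      show "\<forall>\<^sub>F x in F. norm (t2 x) \<le> Cp * x powr (- (\<zeta>*(p-2)))"
        using evgood
      proof eventually_elim
        case (elim x)
        then have x: "x > 0" by (simp add: good_def)
        have "norm (t2 x) \<le> 1 * Cp / (x powr \<zeta>) powr (p - 2)" using T2[OF elim] by simp
        also have "\<dots> = Cp * x powr (- (\<zeta>*(p-2)))" using x by (simp add: powr_powr powr_minus_divide)
        finally show ?case .
      qed
      show "((\<lambda>x. Cp * x powr (- (\<zeta>*(p-2)))) \<longlongrightarrow> 0) F"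
        using tendsto_mult[OF tendsto_const pw, of "- (\<zeta>*(p-2))" Cp] z0 p_gt by simp
    qed
    have LL: "((\<lambda>x. V x - t2 x) \<longlongrightarrow> s2 i) F" using tendsto_diff[OF sigma[of i, folded F_def V_def] xt] by simp
    have ev: "\<forall>\<^sub>F x in F. V x - t2 x = a2 x"
      using evgood by (auto elim!: eventually_mono simp: A2)
    show ?thesis by (rule Lim_transform_eventually[OF LL ev])
  qed
  have lim3: "(a3 \<longlongrightarrow> (\<Sum>j\<in>UNIV. (b j - b i) * q i j)) F"
  proof -
    have xt: "(t3 \<longlongrightarrow> 0) F"
    proof (rule Lim_null_comparison)
      show "\<forall>\<^sub>F x in F. norm (t3 x) \<le> (2*Bs*Cp) * x powr (- (\<zeta>*p))"
        using evgood
      proof eventually_elim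
        case (elim x)
        then have x: "x > 0" by (simp add: good_def)
        have "norm (t3 x) \<le> (2*Bs) * Cp / (x powr \<zeta>) powr (p - 0)" using T3[OF elim] by simp
        also have "\<dots> = (2*Bs*Cp) * x powr (- (\<zeta>*p))" using x by (simp add: powr_powr powr_minus_divide)
        finally show ?case .
      qed
      show "((\<lambda>x. (2*Bs*Cp) * x powr (- (\<zeta>*p))) \<longlongrightarrow> 0) F"
        using tendsto_mult[OF tendsto_const pw, of "- (\<zeta>*p)" "2*Bs*Cp"] z0 p_gt by simp
    qed
    have Sl: "(S \<longlongrightarrow> (\<Sum>j\<in>UNIV. (b j - b i) * q i j)) F"
      unfolding S_def by (intro tendsto_sum tendsto_mult[OF tendsto_const] q_lim[of i, folded F_def])
    have LL: "((\<lambda>x. S x - t3 x) \<longlongrightarrow> (\<Sum>j\<in>UNIV. (b j - b i) * q i j)) F" using tendsto_diff[OF Sl xt] by simp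
    have ev: "\<forall>\<^sub>F x in F. S x - t3 x = a3 x"
      using evgood by (auto elim!: eventually_mono simp: A3)
    show ?thesis by (rule Lim_transform_eventually[OF LL ev])
  qed
  define Mf where "Mf x = (\<lambda>z. r*x*((fst z - x) * Ind x z) + r*(r-1)/2*((fst z - x)^2 * Ind x z) + r/2*((b (snd z) - b i) * Ind x z))" for x
  define LHS where "LHS x = measure_pmf.expectation (K (x, i))
                (\<lambda>(y, j). (f_r b r y j - f_r b r x i) * indicator {z. \<bar>fst z - x\<bar> \<le> x powr \<zeta>} (y, j))" for x
  define Gf where "Gf x = (\<lambda>z. x powr (2-r) * (case z of (y, j) \<Rightarrow> (f_r b r y j - f_r b r x i) * indicator {z. \<bar>fst z - x\<bar> \<le> x powr \<zeta>} (y, j)))" for x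
  define Wf where "Wf x = (\<lambda>z::real \<times> 's. w x * (K3*(fst z - x)^2 + L))" for x
  define M1 where "M1 x = r*(x*a1 x) + r*(r-1)/2*a2 x + r/2*a3 x" for x

  have Wf0: "Wf x z \<ge> 0" for x z unfolding Wf_def using w0 K3p L0 by simp
  have ptw: "\<bar>Gf x z - Mf x z\<bar> \<le> Wf x z" if "good x" for x z
  proof -
    obtain y j where z: "z = (y,j)" by (cases z)
    have x: "x > 0" "x powr \<zeta> \<le> x/2" "x0 \<le> x/2" using that good_def by auto
    show ?thesis
    proof (cases "\<bar>y - x\<bar> \<le> x powr \<zeta>")
      case True
      have "y \<ge> x0" using True x by (auto simp: abs_le_iff)
      then have fy: "f_r b r y j = y powr r + r/2*b j*y powr (r-2)"
        by (simp add: f_r_def x0_def)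
      have "x \<ge> x0" using x by simp
      then have fx: "f_r b r x i = x powr r + r/2*b i*x powr (r-2)"
        by (simp add: f_r_def x0_def)
      have xw: "\<bar>y - x\<bar> \<le> x * w x"
        using True mul_powr[OF x(1), of \<zeta>] by (simp add: w_def)
      have d1: "\<bar>y - x\<bar> \<le> x/2" using True x by simp
      have P: "\<bar>x powr (2-r) * ((y powr r + r/2*b j*y powr (r-2)) - (x powr r + r/2*b i*x powr (r-2)))
          - (r*x*(y-x) + r*(r-1)/2*(y-x)^2 + r/2*(b j-b i))\<bar> \<le> w x*(K3*(y-x)^2 + \<bar>r\<bar>/2*\<bar>b j\<bar>*K1)"
        by (rule pointwise[OF x(1) d1 xw K1 K3 K1p K3p])
      have eq: "Gf x z - Mf x z = x powr (2-r) * ((y powr r + r/2*b j*y powr (r-2)) - (x powr r + r/2*b i*x powr (r-2)))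
          - (r*x*(y-x) + r*(r-1)/2*(y-x)^2 + r/2*(b j-b i))"
        by (simp add: Gf_def Mf_def Ind_def z True fy fx)
      have "w x*(K3*(y-x)^2 + \<bar>r\<bar>/2*\<bar>b j\<bar>*K1) \<le> w x*(K3*(y-x)^2 + L)"
        unfolding L_def by (intro mult_left_mono add_left_mono w0 mult_right_mono) (use bB K1p in auto)
      then show ?thesis using P unfolding eq by (simp add: Wf_def z)
    next
      case False
      then show ?thesis using Wf0[of x z] by (simp add: Gf_def Mf_def Ind_def z)
    qed
  qed
  have iM: "integrable (measure_pmf (K (x,i))) (Mf x)" if s: "(x,i)\<in>\<Sigma>" for x
    unfolding Mf_def using iA1[OF s] iA2[OF s] iA3[of x] by auto
  have iW: "integrable (measure_pmf (K (x,i))) (Wf x)" if s: "(x,i)\<in>\<Sigma>" for x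
    unfolding Wf_def using iV[OF s] by auto
  have iG: "integrable (measure_pmf (K (x,i))) (Gf x)" if g: "good x" for x
  proof -
    have s: "(x,i)\<in>\<Sigma>" using g good_def by auto
    have I: "integrable (measure_pmf (K (x,i))) (\<lambda>z. \<bar>Mf x z\<bar> + Wf x z)"
      using iM[OF s] iW[OF s] by auto
    show ?thesis
    proof (rule Bochner_Integration.integrable_bound[OF I])
      show "AE z in measure_pmf (K (x, i)). norm (Gf x z) \<le> norm (\<bar>Mf x z\<bar> + Wf x z)"
      proof (rule AE_I2)
        fix z
        have "\<bar>Gf x z\<bar> \<le> \<bar>Mf x z\<bar> + Wf x z" using ptw[OF g, of z] by linarith
        then show "norm (Gf x z) \<le> norm (\<bar>Mf x z\<bar> + Wf x z)" using Wf0[of x z] by simp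
      qed
    qed simp
  qed
  have EG: "measure_pmf.expectation (K (x,i)) (Gf x) = x powr (2-r) * LHS x" for x
    unfolding Gf_def LHS_def by simp
  have EM: "measure_pmf.expectation (K (x,i)) (Mf x) = M1 x" if s: "(x,i)\<in>\<Sigma>" for x
  proof -
    have "measure_pmf.expectation (K (x,i)) (Mf x) =
        measure_pmf.expectation (K (x,i)) (\<lambda>z. r*x*((fst z - x) * Ind x z) + r*(r-1)/2*((fst z - x)^2 * Ind x z))
        + measure_pmf.expectation (K (x,i)) (\<lambda>z. r/2*((b (snd z) - b i) * Ind x z))"
      unfolding Mf_def by (rule Bochner_Integration.integral_add) (use iA1[OF s] iA2[OF s] iA3[of x] in auto)
    also have "\<dots> = measure_pmf.expectation (K (x,i)) (\<lambda>z. r*x*((fst z - x) * Ind x z))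
        + measure_pmf.expectation (K (x,i)) (\<lambda>z. r*(r-1)/2*((fst z - x)^2 * Ind x z))
        + measure_pmf.expectation (K (x,i)) (\<lambda>z. r/2*((b (snd z) - b i) * Ind x z))"
      by (subst Bochner_Integration.integral_add) (use iA1[OF s] iA2[OF s] in auto)
    also have "\<dots> = M1 x" by (simp add: M1_def a1_def a2_def a3_def)
    finally show ?thesis .
  qed
  have EW: "measure_pmf.expectation (K (x,i)) (Wf x) = w x * (K3 * V x + L)" if s: "(x,i)\<in>\<Sigma>" for x
  proof -
    have "measure_pmf.expectation (K (x,i)) (Wf x) = w x * measure_pmf.expectation (K (x,i)) (\<lambda>z. K3*(fst z - x)^2 + L)"
      unfolding Wf_def by simp
    also have "measure_pmf.expectation (K (x,i)) (\<lambda>z. K3*(fst z - x)^2 + L)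
        = measure_pmf.expectation (K (x,i)) (\<lambda>z. K3*(fst z - x)^2) + measure_pmf.expectation (K (x,i)) (\<lambda>z. L)"
      by (rule Bochner_Integration.integral_add) (use iV[OF s] in auto)
    also have "\<dots> = K3 * V x + L" by (simp add: V')
    finally show ?thesis .
  qed
  have lim4: "((\<lambda>x. x powr (2-r) * LHS x - M1 x) \<longlongrightarrow> 0) F"
  proof (rule Lim_null_comparison)
    show "\<forall>\<^sub>F x in F. norm (x powr (2-r) * LHS x - M1 x) \<le> w x * (K3 * V x + L)"
      using evgood
    proof eventually_elim
      case (elim x)
      have s: "(x,i)\<in>\<Sigma>" using elim good_def by auto
      have "x powr (2-r) * LHS x - M1 x = measure_pmf.expectation (K (x,i)) (\<lambda>z. Gf x z - Mf x z)"
        using Bochner_Integration.integral_diff[OF iG[OF elim] iM[OF s]] EG EM[OF s] by simp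
      also have "\<bar>\<dots>\<bar> \<le> measure_pmf.expectation (K (x,i)) (Wf x)"
        by (rule abs_int_bound[OF iW[OF s] ptw[OF elim]])
      finally show ?case using EW[OF s] by simp
    qed
    have Vlim: "(V \<longlongrightarrow> s2 i) F" using sigma[of i, folded F_def V_def] .
    show "((\<lambda>x. w x * (K3 * V x + L)) \<longlongrightarrow> 0) F"
      using tendsto_mult[OF wlim tendsto_add[OF tendsto_mult_left[OF Vlim, of K3] tendsto_const[of L]]] by simp
  qed

  define A where "A = 2 * c i + (r - 1) * s2 i + (\<Sum>j\<in>UNIV. (b j - b i) * q i j)"
  have M1lim: "(M1 \<longlongrightarrow> r/2*A) F"
  proof -
    have lim: "(M1 \<longlongrightarrow> r * c i + r*(r-1)/2 * s2 i + r/2 * (\<Sum>j\<in>UNIV. (b j - b i) * q i j)) F"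
      unfolding M1_def
      by (rule tendsto_add[OF tendsto_add[OF tendsto_mult_left[OF lim1, of r] tendsto_mult_left[OF lim2, of "r*(r-1)/2"]] tendsto_mult_left[OF lim3, of "r/2"]])
    have eqA: "r * c i + r*(r-1)/2 * s2 i + r/2 * (\<Sum>j\<in>UNIV. (b j - b i) * q i j) = r/2*A"
      by (simp add: A_def field_simps)
    show ?thesis using lim unfolding eqA .
  qed
  have Tlim: "((\<lambda>x. x powr (2-r) * LHS x) \<longlongrightarrow> r/2*A) F"
    using tendsto_add[OF M1lim lim4] by simp
  define e where "e x = 2/r*(x powr (2-r)*LHS x) - A" for x
  have elim: "(e \<longlongrightarrow> 0) F"
  proof -
    have "(e \<longlongrightarrow> 2/r*(r/2*A) - A) F" unfolding e_def
      by (rule tendsto_diff[OF tendsto_mult_left[OF Tlim] tendsto_const])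
    then show ?thesis using r by simp
  qed
  have eqv: "\<forall>\<^sub>F x in F. LHS x = r / 2 * x powr (r - 2) * (A + e x)"
    using evgood
  proof eventually_elim
    case (elim x)
    then have x: "x > 0" by (simp add: good_def)
    have pp: "x powr (r-2) * x powr (2-r) = 1" using x by (simp add: powr_add[symmetric])
    have "r / 2 * x powr (r - 2) * (A + e x) = (x powr (r-2) * x powr (2-r)) * LHS x * (r/2*(2/r))"
      unfolding e_def by (simp add: algebra_simps)
    also have "\<dots> = LHS x" using r pp by simp
    finally show ?case by simp
  qed
  have "(e \<longlongrightarrow> 0) (at_top_in \<Sigma> i) \<and> (\<forall>\<^sub>F x in at_top_in \<Sigma> i. LHS x = r / 2 * x powr (r - 2) * (A + e x))"
    using elim eqv unfolding F_def by blast
  then show ?thesis unfolding LHS_def A_def by blast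


qed

end
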